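(* $B(\mathcal Y_+,\mathcal Y_-)\neq0$.
   Context: $d\ge5$. $W(x)=c_0(1+|x|^2)^{-\frac{d-2}{2}}$ with $c_0>0$ so that $-\Delta W=(|x|^{-4}*|W|^2)W$. For real $f$: $L_+f=-\Delta f-(|x|^{-4}*W^2)f-2(|x|^{-4}*(Wf))W$, $L_-f=-\Delta f-(|x|^{-4}*W^2)f$; for $h=h_1+ih_2$, $\mathcal Lh=-L_-h_2+iL_+h_1$; $B(g,h)=\frac12\int(L_+g_1)h_1+\frac12\int(L_-g_2)h_2$. Here $e_0>0$ and $\mathcal Y_\pm\in\mathcal S(\mathbb{R}^d)$ are nonzero radial functions with $\mathcal L\mathcal Y_\pm=\pm e_0\mathcal Y_\pm$ and $\mathcal Y_+=\overline{\mathcal Y_-}$. *)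

theory Defs
  imports "HOL-Analysis.Analysis"
begin

text \<open>Functions on R^d are modelled as functions on real^'n, with d = CARD('n).\<close>

definition pd :: "'n::finite \<Rightarrow> (real^'n \<Rightarrow> 'b::real_normed_vector) \<Rightarrow> real^'n \<Rightarrow> 'b" where
  "pd i f x = vector_derivative (\<lambda>t. f (x + t *\<^sub>R axis i 1)) (at 0)"

primrec pds :: "'n::finite list \<Rightarrow> (real^'n \<Rightarrow> 'b::real_normed_vector) \<Rightarrow> real^'n \<Rightarrow> 'b" where
  "pds [] f = f"
| "pds (i # is) f = pd i (pds is f)"

definition laplacian :: "(real^'n::finite \<Rightarrow> 'b::real_normed_vector) \<Rightarrow> real^'n \<Rightarrow> 'b" where
  "laplacian f x = (\<Sum>i\<in>UNIV. pd i (pd i f) x)"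

definition schwartz :: "(real^'n::finite \<Rightarrow> 'b::real_normed_vector) \<Rightarrow> bool" where
  "schwartz f \<longleftrightarrow>
     (\<forall>is x. pds is f differentiable (at x)) \<and>
     (\<forall>is (k::nat). \<exists>C. \<forall>x. (1 + norm x) ^ k * norm (pds is f x) \<le> C)"

definition radial :: "(real^'n::finite \<Rightarrow> 'b) \<Rightarrow> bool" where
  "radial f \<longleftrightarrow> (\<forall>x y. norm x = norm y \<longrightarrow> f x = f y)"

definition conv4 :: "(real^'n::finite \<Rightarrow> real) \<Rightarrow> real^'n \<Rightarrow> real" where
  "conv4 g x = integral\<^sup>L lborel (\<lambda>y. g y / norm (x - y) ^ 4)"

definition Lplus :: "(real^'n::finite \<Rightarrow> real) \<Rightarrow> (real^'n \<Rightarrow> real) \<Rightarrow> real^'n \<Rightarrow> real" where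
  "Lplus W f x = - laplacian f x - conv4 (\<lambda>y. (W y)\<^sup>2) x * f x
                 - 2 * conv4 (\<lambda>y. W y * f y) x * W x"

definition Lminus :: "(real^'n::finite \<Rightarrow> real) \<Rightarrow> (real^'n \<Rightarrow> real) \<Rightarrow> real^'n \<Rightarrow> real" where
  "Lminus W f x = - laplacian f x - conv4 (\<lambda>y. (W y)\<^sup>2) x * f x"

definition Lop :: "(real^'n::finite \<Rightarrow> real) \<Rightarrow> (real^'n \<Rightarrow> complex) \<Rightarrow> real^'n \<Rightarrow> complex" where
  "Lop W h x = - complex_of_real (Lminus W (\<lambda>y. Im (h y)) x)
               + \<i> * complex_of_real (Lplus W (\<lambda>y. Re (h y)) x)"

definition Bform :: "(real^'n::finite \<Rightarrow> real) \<Rightarrow> (real^'n \<Rightarrow> complex) \<Rightarrow> (real^'n \<Rightarrow> complex) \<Rightarrow> real" where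
  "Bform W g h = 1/2 * integral\<^sup>L lborel (\<lambda>x. Lplus W (\<lambda>y. Re (g y)) x * Re (h x))
               + 1/2 * integral\<^sup>L lborel (\<lambda>x. Lminus W (\<lambda>y. Im (g y)) x * Im (h x))"

end

theory Submission
  imports Defs "HOL-Probability.Sinc_Integral"
begin

lemma integrable_inv_sq: "integrable lborel (\<lambda>x::real. inverse (1 + x^2))"
  using integrable_inverse_1_plus_square by (simp add: set_integrable_def)

lemma integrable_prod_basis:
  "integrable lborel (\<lambda>x::'a::euclidean_space. \<Prod>b\<in>Basis. inverse (1 + (x \<bullet> b)^2))"
proof (subst integrable_iff_bounded, intro conjI)
  show "(\<lambda>x::'a. \<Prod>b\<in>Basis. inverse (1 + (x \<bullet> b)^2)) \<in> borel_measurable lborel"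
    by measurable
  have fin: "(\<integral>\<^sup>+x. ennreal (inverse (1 + x^2)) \<partial>lborel) < \<infinity>"
    using integrable_inv_sq unfolding integrable_iff_bounded by simp
  have "(\<integral>\<^sup>+x. ennreal (norm (\<Prod>b\<in>Basis. inverse (1 + ((x::'a) \<bullet> b)^2))) \<partial>lborel)
      = (\<integral>\<^sup>+x. (\<Prod>b\<in>Basis. ennreal (inverse (1 + ((x::'a) \<bullet> b)^2))) \<partial>lborel)"
  proof -
    have eq: "ennreal (norm (\<Prod>b\<in>Basis. inverse (1 + (x \<bullet> b)^2))) = (\<Prod>b\<in>Basis. ennreal (inverse (1 + (x \<bullet> b)^2)))" for x :: 'a
    proof -
    have nn: "\<And>b. 0 \<le> inverse (1 + (x \<bullet> b)^2)" by (simp add: add_nonneg_nonneg)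
    have "norm (\<Prod>b\<in>Basis. inverse (1 + (x \<bullet> b)^2)) = (\<Prod>b\<in>Basis. inverse (1 + (x \<bullet> b)^2))"
      using nn by (simp add: prod_nonneg)
    then show ?thesis
      using nn by (simp add: prod_ennreal)
    qed
    show ?thesis by (simp only: eq)
  qed
  also have "\<dots> = (\<Prod>b\<in>(Basis::'a set). (\<integral>\<^sup>+x. ennreal (inverse (1 + x^2)) \<partial>lborel))"
    by (rule nn_integral_lborel_prod) auto
  also have "\<dots> < \<infinity>"
    using fin by (simp add: less_top[symmetric] power_eq_top_ennreal)
  finally show "(\<integral>\<^sup>+x. ennreal (norm (\<Prod>b\<in>Basis. inverse (1 + ((x::'a) \<bullet> b)^2))) \<partial>lborel) < \<infinity>" .
qed

lemma integrable_decay: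
  "integrable lborel (\<lambda>x::'a::euclidean_space. inverse ((1 + norm x) ^ (2 * DIM('a))))"
proof (rule Bochner_Integration.integrable_bound[OF integrable_prod_basis])
  show "(\<lambda>x::'a. inverse ((1 + norm x) ^ (2 * DIM('a)))) \<in> borel_measurable lborel"
    by measurable
  show "AE x in lborel. norm (inverse ((1 + norm x) ^ (2 * DIM('a))))
        \<le> norm (\<Prod>b\<in>Basis. inverse (1 + ((x::'a) \<bullet> b)^2))"
  proof (intro AE_I2)
    fix x :: 'a
    have "(\<Prod>b\<in>Basis. 1 + (x \<bullet> b)^2) \<le> (\<Prod>b\<in>(Basis::'a set). (1 + norm x)^2)"
    proof (intro prod_mono conjI)
      fix b :: 'a assume "b \<in> Basis"
      then have "\<bar>x \<bullet> b\<bar> \<le> norm x" by (rule Basis_le_norm)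
      then have "(x \<bullet> b)^2 \<le> (norm x)^2"
        by (metis abs_ge_zero abs_le_square_iff abs_norm_cancel)
      then show "1 + (x \<bullet> b)^2 \<le> (1 + norm x)^2"
        by (simp add: power2_eq_square algebra_simps) (smt (verit) norm_ge_zero)
    qed (auto intro: add_nonneg_nonneg)
    also have "\<dots> = (1 + norm x) ^ (2 * DIM('a))"
      by (simp add: power_mult)
    finally have le: "(\<Prod>b\<in>Basis. 1 + (x \<bullet> b)^2) \<le> (1 + norm x) ^ (2 * DIM('a))" .
    have pos: "0 < (\<Prod>b\<in>Basis. 1 + (x \<bullet> b)^2)"
      by (intro prod_pos) (simp add: add_pos_nonneg)
    show "norm (inverse ((1 + norm x) ^ (2 * DIM('a)))) \<le> norm (\<Prod>b\<in>Basis. inverse (1 + (x \<bullet> b)^2))"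
    proof -
      have "inverse ((1 + norm x) ^ (2 * DIM('a))) \<le> inverse (\<Prod>b\<in>Basis. 1 + (x \<bullet> b)^2)"
        using le pos by (rule le_imp_inverse_le)
      also have "\<dots> = (\<Prod>b\<in>Basis. inverse (1 + (x \<bullet> b)^2))"
        using prod_inversef[of "\<lambda>b. 1 + (x \<bullet> b)^2" Basis] by (simp add: o_def)
      finally show ?thesis
        by (simp add: prod_nonneg add_nonneg_nonneg)
    qed
  qed
qed

lemma decay_shift:
  fixes x y :: "'a::real_normed_vector"
  assumes "norm y \<le> 1"
  shows "inverse ((1 + norm (x + y)) ^ K) \<le> 2 ^ K * inverse ((1 + norm x) ^ K)"
proof -
  have "norm x \<le> norm (x + y) + norm y"
    by (metis add_diff_cancel_right' norm_triangle_ineq4)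
  then have "1 + norm x \<le> 2 * (1 + norm (x + y))" using assms by (smt (verit) norm_ge_zero)
  then have "(1 + norm x) ^ K \<le> (2 * (1 + norm (x + y))) ^ K"
    by (intro power_mono) auto
  then have "(1 + norm x) ^ K \<le> 2 ^ K * (1 + norm (x + y)) ^ K"
    by (metis power_mult_distrib)
  then have "inverse (2 ^ K * (1 + norm (x + y)) ^ K) \<le> inverse ((1 + norm x) ^ K)"
    by (intro le_imp_inverse_le) (auto intro!: mult_pos_pos zero_less_power add_pos_nonneg)
  then have "inverse ((1 + norm (x + y)) ^ K) / 2 ^ K \<le> inverse ((1 + norm x) ^ K)"
    by (simp add: inverse_mult_distrib divide_inverse mult.commute)
  then show ?thesis
    by (simp add: divide_le_eq mult.commute)
qed

lemma ibp_line:
  fixes F G :: "'a::euclidean_space \<Rightarrow> real" and e :: 'a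
  assumes e: "norm e = 1"
    and cF: "continuous_on UNIV F" and cG: "continuous_on UNIV G"
    and dF: "\<And>x. ((\<lambda>t. F (x + t *\<^sub>R e)) has_real_derivative G x) (at 0)"
    and bF: "\<And>x. \<bar>F x\<bar> \<le> C * inverse ((1 + norm x) ^ (2 * DIM('a)))"
    and bG: "\<And>x. \<bar>G x\<bar> \<le> C * inverse ((1 + norm x) ^ (2 * DIM('a)))"
  shows "integral\<^sup>L lborel G = 0"
proof -
  define K where "K = 2 * DIM('a)"
  define w0 where "w0 x = inverse ((1 + norm x) ^ K)" for x :: 'a
  have w0pos: "0 < w0 x" for x unfolding w0_def by (simp add: add_pos_nonneg)
  have intw0: "integrable lborel w0" unfolding w0_def K_def by (rule integrable_decay)
  have C0: "0 \<le> C"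
    using bG[of 0] w0pos[of 0] unfolding w0_def K_def
    by (smt (verit) mult_nonpos_nonneg abs_ge_zero zero_le_mult_iff)
  have mF[measurable]: "F \<in> borel_measurable borel" by (rule borel_measurable_continuous_onI[OF cF])
  have mG[measurable]: "G \<in> borel_measurable borel" by (rule borel_measurable_continuous_onI[OF cG])
  have intF: "integrable lborel F"
  proof (rule Bochner_Integration.integrable_bound[of _ "\<lambda>x. C * w0 x"])
    show "integrable lborel (\<lambda>x. C * w0 x)" using intw0 by simp
    show "AE x in lborel. norm (F x) \<le> norm (C * w0 x)"
      using bF C0 w0pos unfolding w0_def K_def by (auto intro!: AE_I2 simp: abs_mult less_imp_le)
  qed simp
  have shift: "integral\<^sup>L lborel (\<lambda>x. F (c + x)) = integral\<^sup>L lborel F"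
      and shift_int: "integrable lborel (\<lambda>x. F (c + x))" for c :: 'a
  proof -
    have m: "(+) c \<in> measurable lborel borel" by simp
    have "integral\<^sup>L (distr lborel borel ((+) c)) F = integral\<^sup>L lborel (\<lambda>x. F (c + x))"
      by (rule integral_distr[OF m]) simp
    then show "integral\<^sup>L lborel (\<lambda>x. F (c + x)) = integral\<^sup>L lborel F"
      by (simp add: lborel_distr_plus)
    have "integrable (distr lborel borel ((+) c)) F \<longleftrightarrow> integrable lborel (\<lambda>x. F (c + x))"
      by (rule integrable_distr_eq[OF m]) simp
    then show "integrable lborel (\<lambda>x. F (c + x))"
      using intF by (simp add: lborel_distr_plus)
  qed
  have dt: "((\<lambda>s. F (x + s *\<^sub>R e)) has_real_derivative G (x + t *\<^sub>R e)) (at t)" for x t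
  proof -
    have "((\<lambda>s. F ((x + t *\<^sub>R e) + s *\<^sub>R e)) has_real_derivative G (x + t *\<^sub>R e)) (at 0)"
      by (rule dF)
    then have "((\<lambda>s. F (x + (s + t) *\<^sub>R e)) has_real_derivative G (x + t *\<^sub>R e)) (at 0)"
      by (simp add: scaleR_add_left add.assoc add.commute add.left_commute)
    then show ?thesis
      using DERIV_shift[of "\<lambda>s. F (x + s *\<^sub>R e)" "G (x + t *\<^sub>R e)" 0 t] by simp
  qed
  define h where "h n = 1 / real (Suc n)" for n :: nat
  have hpos: "0 < h n" and hle: "h n \<le> 1" for n unfolding h_def by auto
  define s where "s n x = (F (x + h n *\<^sub>R e) - F x) / h n" for n x
  have ms[measurable]: "s n \<in> borel_measurable lborel" for n
    unfolding s_def by measurable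
  have ints: "integral\<^sup>L lborel (s n) = 0" for n
  proof -
    have "integral\<^sup>L lborel (s n) = integral\<^sup>L lborel (\<lambda>x. F (x + h n *\<^sub>R e) - F x) / h n"
      unfolding s_def by simp
    also have "integral\<^sup>L lborel (\<lambda>x. F (x + h n *\<^sub>R e) - F x)
        = integral\<^sup>L lborel (\<lambda>x. F (x + h n *\<^sub>R e)) - integral\<^sup>L lborel F"
      using shift_int[of "h n *\<^sub>R e"] intF by (simp add: add.commute)
    also have "integral\<^sup>L lborel (\<lambda>x. F (x + h n *\<^sub>R e)) = integral\<^sup>L lborel F"
      using shift[of "h n *\<^sub>R e"] by (simp add: add.commute)
    finally show ?thesis by simp
  qed
  have bound: "norm (s n x) \<le> C * 2 ^ K * w0 x" for n x
  proof -
    obtain z where z: "0 < z" "z < h n"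
      and eq: "F (x + h n *\<^sub>R e) - F (x + 0 *\<^sub>R e) = (h n - 0) * G (x + z *\<^sub>R e)"
      using MVT2[of 0 "h n" "\<lambda>s. F (x + s *\<^sub>R e)" "\<lambda>t. G (x + t *\<^sub>R e)"] hpos[of n] dt by blast
    have "s n x = G (x + z *\<^sub>R e)"
      using eq hpos[of n] unfolding s_def by simp
    moreover have "\<bar>G (x + z *\<^sub>R e)\<bar> \<le> C * w0 (x + z *\<^sub>R e)"
      using bG unfolding w0_def K_def by simp
    moreover have "w0 (x + z *\<^sub>R e) \<le> 2 ^ K * w0 x"
      unfolding w0_def using z hle[of n] e by (intro decay_shift) simp
    ultimately show ?thesis using C0
      by simp (smt (verit, best) mult_left_mono mult.assoc)
  qed
  have lim: "(\<lambda>n. s n x) \<longlonglongrightarrow> G x" for x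
  proof -
    have "((\<lambda>y. (F (x + y *\<^sub>R e) - F (x + 0 *\<^sub>R e)) / (y - 0)) \<longlongrightarrow> G x) (at 0)"
      using dF[of x] unfolding has_field_derivative_iff by simp
    then have l1: "((\<lambda>y. (F (x + y *\<^sub>R e) - F x) / y) \<longlongrightarrow> G x) (at 0)" by simp
    have "h \<longlonglongrightarrow> 0"
      unfolding h_def using LIMSEQ_Suc[OF lim_inverse_n'] by (simp add: divide_inverse)
    then have l2: "filterlim h (at 0) sequentially"
      using hpos by (auto simp: filterlim_at intro!: always_eventually) (metis less_irrefl)
    show ?thesis
      using filterlim_compose[OF l1 l2] unfolding s_def by simp
  qed
  have "(\<lambda>n. integral\<^sup>L lborel (s n)) \<longlonglongrightarrow> integral\<^sup>L lborel G"
  proof (rule integral_dominated_convergence[where w = "\<lambda>x. C * 2 ^ K * w0 x"])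
    show "integrable lborel (\<lambda>x. C * 2 ^ K * w0 x)" using intw0 by simp
  qed (auto intro!: AE_I2 lim bound[unfolded real_norm_def])
  then have "(\<lambda>n. 0::real) \<longlonglongrightarrow> integral\<^sup>L lborel G" by (simp add: ints)
  then show ?thesis using LIMSEQ_unique tendsto_const by blast
qed

definition rapid :: "('a::real_normed_vector \<Rightarrow> real) \<Rightarrow> bool" where
  "rapid f \<longleftrightarrow> (\<forall>k::nat. \<exists>C. \<forall>x. \<bar>f x\<bar> * (1 + norm x) ^ k \<le> C)"

definition polyb :: "('a::real_normed_vector \<Rightarrow> real) \<Rightarrow> bool" where
  "polyb f \<longleftrightarrow> (\<exists>C (N::nat). \<forall>x. \<bar>f x\<bar> \<le> C * (1 + norm x) ^ N)"

lemma rapid_mult_poly: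
  assumes f: "rapid f" and g: "polyb g"
  shows "rapid (\<lambda>x. f x * g x)"
  unfolding rapid_def
proof
  fix k :: nat
  obtain Cg N where Cg: "\<And>x. \<bar>g x\<bar> \<le> Cg * (1 + norm x) ^ N" using g unfolding polyb_def by blast
  obtain Cf where Cf: "\<And>x. \<bar>f x\<bar> * (1 + norm x) ^ (k + N) \<le> Cf" using f unfolding rapid_def by blast
  have Cg0: "0 \<le> Cg" using Cg[of 0] abs_ge_zero[of "g 0"] by (simp del: abs_ge_zero)
  show "\<exists>C. \<forall>x. \<bar>f x * g x\<bar> * (1 + norm x) ^ k \<le> C"
  proof (intro exI allI)
    fix x
    have "\<bar>f x * g x\<bar> * (1 + norm x) ^ k = \<bar>g x\<bar> * (\<bar>f x\<bar> * (1 + norm x) ^ k)"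
      by (simp add: abs_mult)
    also have "\<dots> \<le> (Cg * (1 + norm x) ^ N) * (\<bar>f x\<bar> * (1 + norm x) ^ k)"
      by (intro mult_right_mono Cg) simp
    also have "\<dots> = Cg * (\<bar>f x\<bar> * (1 + norm x) ^ (k + N))"
      by (simp add: power_add algebra_simps)
    also have "\<dots> \<le> Cg * Cf" by (intro mult_left_mono Cf Cg0)
    finally show "\<bar>f x * g x\<bar> * (1 + norm x) ^ k \<le> Cg * Cf" .
  qed
qed

lemma poly_mult_rapid: "polyb g \<Longrightarrow> rapid f \<Longrightarrow> rapid (\<lambda>x. g x * f x)"
  using rapid_mult_poly[of f g] by (simp add: mult.commute)

lemma rapid_add:
  assumes f: "rapid f" and g: "rapid g"
  shows "rapid (\<lambda>x. f x + g x)"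
  unfolding rapid_def
proof
  fix k :: nat
  obtain C1 where C1: "\<And>x. \<bar>f x\<bar> * (1 + norm x) ^ k \<le> C1" using f unfolding rapid_def by blast
  obtain C2 where C2: "\<And>x. \<bar>g x\<bar> * (1 + norm x) ^ k \<le> C2" using g unfolding rapid_def by blast
  show "\<exists>C. \<forall>x. \<bar>f x + g x\<bar> * (1 + norm x) ^ k \<le> C"
  proof (intro exI allI)
    fix x
    have "\<bar>f x + g x\<bar> * (1 + norm x) ^ k \<le> (\<bar>f x\<bar> + \<bar>g x\<bar>) * (1 + norm x) ^ k"
      by (intro mult_right_mono) auto
    also have "\<dots> \<le> C1 + C2" using C1[of x] C2[of x] by (simp add: algebra_simps)
    finally show "\<bar>f x + g x\<bar> * (1 + norm x) ^ k \<le> C1 + C2" .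
  qed
qed

lemma polyb_const: "polyb (\<lambda>x. c)"
  unfolding polyb_def by (rule exI[of _ "\<bar>c\<bar>"], rule exI[of _ 0]) simp

lemma rapid_cmult: "rapid f \<Longrightarrow> rapid (\<lambda>x. c * f x)"
  using poly_mult_rapid[OF polyb_const] .

lemma rapid_uminus: "rapid f \<Longrightarrow> rapid (\<lambda>x. - f x)"
  using rapid_cmult[of f "-1"] by simp

lemma rapid_diff: "rapid f \<Longrightarrow> rapid g \<Longrightarrow> rapid (\<lambda>x. f x - g x)"
  using rapid_add[of f "\<lambda>x. - g x"] rapid_uminus[of g] by simp

lemma rapid_imp_polyb: "rapid f \<Longrightarrow> polyb f"
  unfolding rapid_def polyb_def by (metis mult.right_neutral power_0)

lemma rapid_mult: "rapid f \<Longrightarrow> rapid g \<Longrightarrow> rapid (\<lambda>x. f x * g x)"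
  using rapid_mult_poly rapid_imp_polyb by blast

lemma polyb_mult:
  assumes f: "polyb f" and g: "polyb g"
  shows "polyb (\<lambda>x. f x * g x)"
proof -
  obtain C1 N1 where C1: "\<And>x. \<bar>f x\<bar> \<le> C1 * (1 + norm x) ^ N1" using f unfolding polyb_def by blast
  obtain C2 N2 where C2: "\<And>x. \<bar>g x\<bar> \<le> C2 * (1 + norm x) ^ N2" using g unfolding polyb_def by blast
  have "\<bar>f x * g x\<bar> \<le> (C1 * C2) * (1 + norm x) ^ (N1 + N2)" for x
  proof -
    have "\<bar>f x * g x\<bar> = \<bar>f x\<bar> * \<bar>g x\<bar>" by (simp add: abs_mult)
    also have "\<dots> \<le> (C1 * (1 + norm x) ^ N1) * (C2 * (1 + norm x) ^ N2)"
      by (intro mult_mono C1 C2 abs_ge_zero order_trans[OF abs_ge_zero C1])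
    finally show ?thesis by (simp add: power_add algebra_simps)
  qed
  then show ?thesis unfolding polyb_def by blast
qed

lemma polyb_add:
  assumes f: "polyb f" and g: "polyb g"
  shows "polyb (\<lambda>x. f x + g x)"
proof -
  obtain C1 N1 where C1: "\<And>x. \<bar>f x\<bar> \<le> C1 * (1 + norm x) ^ N1" using f unfolding polyb_def by blast
  obtain C2 N2 where C2: "\<And>x. \<bar>g x\<bar> \<le> C2 * (1 + norm x) ^ N2" using g unfolding polyb_def by blast
  have C10: "0 \<le> C1" using C1[of 0] abs_ge_zero[of "f 0"] by (simp del: abs_ge_zero)
  have C20: "0 \<le> C2" using C2[of 0] abs_ge_zero[of "g 0"] by (simp del: abs_ge_zero)
  have "\<bar>f x + g x\<bar> \<le> (C1 + C2) * (1 + norm x) ^ (N1 + N2)" for x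
  proof -
    have p1: "(1 + norm x) ^ N1 \<le> (1 + norm x) ^ (N1 + N2)" by (intro power_increasing) auto
    have p2: "(1 + norm x) ^ N2 \<le> (1 + norm x) ^ (N1 + N2)" by (intro power_increasing) auto
    have "\<bar>f x + g x\<bar> \<le> C1 * (1 + norm x) ^ N1 + C2 * (1 + norm x) ^ N2"
      using C1[of x] C2[of x] by linarith
    also have "\<dots> \<le> C1 * (1 + norm x) ^ (N1 + N2) + C2 * (1 + norm x) ^ (N1 + N2)"
      by (intro add_mono mult_left_mono p1 p2 C10 C20)
    finally show ?thesis by (simp add: algebra_simps)
  qed
  then show ?thesis unfolding polyb_def by blast
qed

lemma polyb_norm: "polyb (\<lambda>x. norm x)"
  unfolding polyb_def by (rule exI[of _ 1], rule exI[of _ 1]) simp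

lemma polyb_le: "polyb f \<Longrightarrow> (\<And>x. \<bar>g x\<bar> \<le> \<bar>f x\<bar>) \<Longrightarrow> polyb g"
  unfolding polyb_def by (meson order_trans)

lemma rapid_bound:
  assumes "rapid f"
  shows "\<exists>C. \<forall>x. \<bar>f x\<bar> \<le> C * inverse ((1 + norm x) ^ K)"
proof -
  obtain C where C: "\<And>x. \<bar>f x\<bar> * (1 + norm x) ^ K \<le> C" using assms unfolding rapid_def by blast
  have "\<bar>f x\<bar> \<le> C * inverse ((1 + norm x) ^ K)" for x
  proof -
    have pos: "0 < (1 + norm x) ^ K" by (simp add: add_pos_nonneg)
    then show ?thesis using C[of x] by (simp add: field_simps)
  qed
  then show ?thesis by blast
qed

lemma rapid_integrable:
  fixes f :: "'a::euclidean_space \<Rightarrow> real"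
  assumes "rapid f" "continuous_on UNIV f"
  shows "integrable lborel f"
proof -
  obtain C where C: "\<And>x. \<bar>f x\<bar> \<le> C * inverse ((1 + norm x) ^ (2 * DIM('a)))"
    using rapid_bound[OF assms(1)] by blast
  show ?thesis
  proof (rule Bochner_Integration.integrable_bound[of _ "\<lambda>x. C * inverse ((1 + norm x) ^ (2 * DIM('a)))"])
    show "integrable lborel (\<lambda>x::'a. C * inverse ((1 + norm x) ^ (2 * DIM('a))))"
      using integrable_decay[where 'a='a] by simp
    show "f \<in> borel_measurable lborel" using borel_measurable_continuous_onI[OF assms(2)] by simp
    show "AE x in lborel. norm (f x) \<le> norm (C * inverse ((1 + norm x) ^ (2 * DIM('a))))"
      using C by (auto intro!: AE_I2 intro: order_trans[OF _ abs_ge_self])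
  qed
qed

lemma line_vderiv:
  fixes f :: "real^'n::finite \<Rightarrow> 'b::real_normed_vector"
  assumes "f differentiable (at x)"
  shows "((\<lambda>t. f (x + t *\<^sub>R axis i 1)) has_vector_derivative pd i f x) (at 0)"
proof -
  have d1: "(\<lambda>t::real. x + t *\<^sub>R axis i 1) differentiable (at 0)"
    by (intro derivative_intros)
  have "f differentiable (at ((\<lambda>t::real. x + t *\<^sub>R axis i 1) 0))" using assms by simp
  from differentiable_chain_at[OF d1 this]
  have "(\<lambda>t. f (x + t *\<^sub>R axis i 1)) differentiable (at 0)" by (simp add: o_def)
  then show ?thesis unfolding pd_def by (simp add: vector_derivative_works)
qed

lemma pd_eqI:
  fixes f :: "real^'n::finite \<Rightarrow> real"
  assumes "((\<lambda>t. f (x + t *\<^sub>R axis i 1)) has_real_derivative D) (at 0)"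
  shows "pd i f x = D"
  using assms unfolding pd_def has_real_derivative_iff_has_vector_derivative
  by (rule vector_derivative_at)

lemma line_Im:
  fixes f :: "real^'n::finite \<Rightarrow> complex"
  assumes "f differentiable (at x)"
  shows "((\<lambda>t. Im (f (x + t *\<^sub>R axis i 1))) has_real_derivative Im (pd i f x)) (at 0)"
  using line_vderiv[OF assms] by (rule has_field_derivative_Im)

lemma line_Re:
  fixes f :: "real^'n::finite \<Rightarrow> complex"
  assumes "f differentiable (at x)"
  shows "((\<lambda>t. Re (f (x + t *\<^sub>R axis i 1))) has_real_derivative Re (pd i f x)) (at 0)"
  using line_vderiv[OF assms] by (rule has_field_derivative_Re)

lemma pd_Im:
  fixes f :: "real^'n::finite \<Rightarrow> complex"
  assumes "\<And>x. f differentiable (at x)"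
  shows "pd i (\<lambda>y. Im (f y)) = (\<lambda>x. Im (pd i f x))"
  using pd_eqI[OF line_Im[OF assms]] by (simp add: fun_eq_iff)

lemma line_shift:
  fixes f g :: "'a::real_normed_vector \<Rightarrow> real"
  assumes "\<And>x. ((\<lambda>t. f (x + t *\<^sub>R e)) has_real_derivative g x) (at 0)"
  shows "((\<lambda>s. f (x + s *\<^sub>R e)) has_real_derivative g (x + t *\<^sub>R e)) (at t)"
proof -
  have "((\<lambda>s. f ((x + t *\<^sub>R e) + s *\<^sub>R e)) has_real_derivative g (x + t *\<^sub>R e)) (at 0)"
    by (rule assms)
  then have "((\<lambda>s. f (x + (s + t) *\<^sub>R e)) has_real_derivative g (x + t *\<^sub>R e)) (at 0)"
    by (simp add: scaleR_add_left add.assoc add.commute add.left_commute)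
  then show ?thesis
    using DERIV_shift[of "\<lambda>s. f (x + s *\<^sub>R e)" "g (x + t *\<^sub>R e)" 0 t] by simp
qed

lemma norm_line_sq:
  fixes x :: "real^'n::finite"
  shows "(norm (x + t *\<^sub>R axis i 1))^2 = (norm x)^2 + 2 * t * x$i + t^2"
  unfolding power2_norm_eq_inner
  by (simp add: inner_add_left inner_add_right inner_axis inner_axis' inner_axis_axis
      inner_commute power2_eq_square algebra_simps)

lemma line_powr:
  fixes x :: "real^'n::finite"
  shows "((\<lambda>t. (1 + (norm (x + t *\<^sub>R axis i 1))^2) powr q) has_real_derivative
          q * (1 + (norm x)^2) powr (q - 1) * (2 * x$i)) (at 0)"
proof -
  have pos: "0 < 1 + (norm x)^2" by (simp add: add_pos_nonneg)
  have "((\<lambda>t. (1 + ((norm x)^2 + 2 * t * x$i + t^2)) powr q) has_real_derivative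
          q * (1 + ((norm x)^2 + 2 * 0 * x$i + 0^2)) powr (q - 1) * (0 + (2 * x$i + 2 * 0))) (at 0)"
    using pos by (intro derivative_eq_intros refl) auto
  then show ?thesis by (simp add: norm_line_sq)
qed

lemma polyb_powr: "polyb (\<lambda>x::'a::real_normed_vector. (1 + (norm x)^2) powr q)"
proof -
  define N where "N = nat \<lceil>q\<rceil>"
  have "\<bar>(1 + (norm x)^2) powr q\<bar> \<le> 1 * (1 + norm x) ^ (2 * N)" for x :: 'a
  proof -
    have r1: "1 \<le> 1 + (norm x)^2" by simp
    have "(1 + (norm x)^2) powr q \<le> (1 + (norm x)^2) powr (real N)"
      using r1 unfolding N_def by (intro powr_mono) linarith+
    also have "\<dots> = (1 + (norm x)^2) ^ N" by (rule powr_realpow) (simp add: add_pos_nonneg)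
    also have "\<dots> \<le> ((1 + norm x)^2) ^ N"
      by (intro power_mono) (auto simp: power2_eq_square algebra_simps)
    finally show ?thesis by (simp add: power_mult)
  qed
  then show ?thesis unfolding polyb_def by blast
qed

lemma polyb_comp:
  fixes x :: "real^'n::finite"
  shows "polyb (\<lambda>x::real^'n. x$i)"
  by (rule polyb_le[OF polyb_norm]) (simp add: component_le_norm_cart)

definition Wi :: "real \<Rightarrow> real \<Rightarrow> 'n::finite \<Rightarrow> real^'n \<Rightarrow> real" where
  "Wi c0 p i x = c0 * (p * (1 + (norm x)^2) powr (p - 1) * (2 * x$i))"

definition Wii :: "real \<Rightarrow> real \<Rightarrow> 'n::finite \<Rightarrow> real^'n \<Rightarrow> real" where
  "Wii c0 p i x = c0 * p * 2 * ((1 + (norm x)^2) powr (p - 1)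
                    + x$i * ((p - 1) * (1 + (norm x)^2) powr (p - 1 - 1) * (2 * x$i)))"

lemma W_line:
  fixes x :: "real^'n::finite"
  shows "((\<lambda>t. c0 * (1 + (norm (x + t *\<^sub>R axis i 1))^2) powr p) has_real_derivative Wi c0 p i x) (at 0)"
  unfolding Wi_def by (intro DERIV_cmult line_powr)

lemma Wi_line:
  fixes x :: "real^'n::finite"
  shows "((\<lambda>t. Wi c0 p i (x + t *\<^sub>R axis i 1)) has_real_derivative Wii c0 p i x) (at 0)"
proof -
  have eq: "(\<lambda>t. Wi c0 p i (x + t *\<^sub>R axis i 1))
      = (\<lambda>t. (c0 * p * 2) * ((x$i + t) * (1 + (norm (x + t *\<^sub>R axis i 1))^2) powr (p - 1)))"
    by (simp add: Wi_def fun_eq_iff axis_def algebra_simps)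
  have d1: "((\<lambda>t::real. x$i + t) has_real_derivative 1) (at 0)"
    by (intro derivative_eq_intros) auto
  have "((\<lambda>t. (c0 * p * 2) * ((x$i + t) * (1 + (norm (x + t *\<^sub>R axis i 1))^2) powr (p - 1)))
       has_real_derivative (c0 * p * 2) * ((x$i + 0) * ((p - 1) * (1 + (norm x)^2) powr (p - 1 - 1) * (2 * x$i))
          + 1 * (1 + (norm (x + 0 *\<^sub>R axis i 1))^2) powr (p - 1))) (at 0)"
    by (intro DERIV_cmult DERIV_mult' d1 line_powr)
  then show ?thesis unfolding eq Wii_def by (simp add: algebra_simps)
qed

lemma cont_W: "continuous_on UNIV (\<lambda>x::'a::real_normed_vector. c0 * (1 + (norm x)^2) powr p)"
  by (intro continuous_intros) (auto simp: add_nonneg_eq_0_iff)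

lemma cont_Wi: "continuous_on UNIV (Wi c0 p i)"
  unfolding Wi_def by (intro continuous_intros) (auto simp: add_nonneg_eq_0_iff)

lemma cont_Wii: "continuous_on UNIV (Wii c0 p i)"
  unfolding Wii_def by (intro continuous_intros) (auto simp: add_nonneg_eq_0_iff)

lemma polyb_Wi: "polyb (Wi c0 p i)"
  unfolding Wi_def
  by (intro polyb_mult polyb_const polyb_powr polyb_comp)

lemma polyb_Wii: "polyb (Wii c0 p i)"
  unfolding Wii_def
  by (intro polyb_mult polyb_add polyb_const polyb_powr polyb_comp)

lemma polyb_invW:
  assumes "c0 > 0"
  shows "polyb (\<lambda>x::'a::real_normed_vector. inverse (c0 * (1 + (norm x)^2) powr p))"
proof -
  have "(\<lambda>x::'a. inverse (c0 * (1 + (norm x)^2) powr p)) = (\<lambda>x. inverse c0 * (1 + (norm x)^2) powr (-p))"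
    by (simp add: fun_eq_iff powr_minus)
  then show ?thesis by (simp add: polyb_mult polyb_const polyb_powr)
qed

lemma polyb_diff: "polyb f \<Longrightarrow> polyb g \<Longrightarrow> polyb (\<lambda>x. f x - g x)"
  using polyb_add[of f "\<lambda>x. (-1) * g x"] polyb_mult[OF polyb_const, of g "-1"] by simp

lemma schwartz_diff: "schwartz f \<Longrightarrow> pds is f differentiable (at x)"
  unfolding schwartz_def by blast

lemma schwartz_cont_Im:
  fixes f :: "real^'n::finite \<Rightarrow> complex"
  assumes "schwartz f"
  shows "continuous_on UNIV (\<lambda>x. Im (pds is f x))"
proof -
  have "continuous_on UNIV (pds is f)"
    using schwartz_diff[OF assms] by (meson continuous_at_imp_continuous_on differentiable_imp_continuous_within)
  then show ?thesis by (intro continuous_intros)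
qed

lemma schwartz_rapid_Im:
  fixes f :: "real^'n::finite \<Rightarrow> complex"
  assumes "schwartz f"
  shows "rapid (\<lambda>x. Im (pds is f x))"
  unfolding rapid_def
proof
  fix k :: nat
  obtain C where C: "\<And>x. (1 + norm x) ^ k * norm (pds is f x) \<le> C"
    using assms unfolding schwartz_def by blast
  have "\<bar>Im (pds is f x)\<bar> * (1 + norm x) ^ k \<le> C" for x
  proof -
    have "\<bar>Im (pds is f x)\<bar> * (1 + norm x) ^ k \<le> norm (pds is f x) * (1 + norm x) ^ k"
      by (intro mult_right_mono abs_Im_le_cmod) simp
    also have "\<dots> \<le> C" using C[of x] by (simp add: mult.commute)
    finally show ?thesis .
  qed
  then show "\<exists>C. \<forall>x. \<bar>Im (pds is f x)\<bar> * (1 + norm x) ^ k \<le> C" by blast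
qed

lemma deriv_F2:
  fixes f g h :: "real \<Rightarrow> real"
  assumes "(f has_real_derivative Df) (at 0)" "(g has_real_derivative Dg) (at 0)"
    "(h has_real_derivative Dh) (at 0)" "g 0 \<noteq> 0"
  shows "((\<lambda>t. (f t * f t) * (h t * inverse (g t))) has_real_derivative
     (f 0 * f 0) * ((Dh * g 0 - h 0 * Dg) * (inverse (g 0) * inverse (g 0))) + (2 * f 0 * Df) * (h 0 * inverse (g 0))) (at 0)"
  by (rule DERIV_cong, rule DERIV_mult'[OF DERIV_mult'[OF assms(1) assms(1)] DERIV_mult'[OF assms(3) DERIV_inverse'[OF assms(2) assms(4)]]])
     (use assms(4) in \<open>simp add: field_simps\<close>)

lemma deriv_quot:
  fixes f g :: "real \<Rightarrow> real"
  assumes "(f has_real_derivative Df) (at t)" "(g has_real_derivative Dg) (at t)" "g t \<noteq> 0"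
    "Df * g t = f t * Dg"
  shows "((\<lambda>t. f t / g t) has_real_derivative 0) (at t)"
  by (rule DERIV_cong, rule DERIV_divide[OF assms(1,2,3)]) (use assms(4) in simp)

lemma ibp_rapid:
  fixes F G :: "real^'n::finite \<Rightarrow> real"
  assumes rF: "rapid F" and rG: "rapid G"
    and cF: "continuous_on UNIV F" and cG: "continuous_on UNIV G"
    and dF: "\<And>x. ((\<lambda>t. F (x + t *\<^sub>R axis i 1)) has_real_derivative G x) (at 0)"
  shows "integral\<^sup>L lborel G = 0"
proof -
  obtain C1 where C1: "\<And>x. \<bar>F x\<bar> \<le> C1 * inverse ((1 + norm x) ^ (2 * DIM(real^'n)))"
    using rapid_bound[OF rF] by blast
  obtain C2 where C2: "\<And>x. \<bar>G x\<bar> \<le> C2 * inverse ((1 + norm x) ^ (2 * DIM(real^'n)))"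
    using rapid_bound[OF rG] by blast
  have w: "0 \<le> inverse ((1 + norm x) ^ (2 * DIM(real^'n)))" for x :: "real^'n" by simp
  show ?thesis
  proof (rule ibp_line[of "axis i 1" F G "max C1 C2"])
    show "\<bar>F x\<bar> \<le> max C1 C2 * inverse ((1 + norm x) ^ (2 * DIM(real^'n)))" for x
      using C1[of x] mult_right_mono[OF max.cobounded1 w[of x], of C1 C2] by linarith
    show "\<bar>G x\<bar> \<le> max C1 C2 * inverse ((1 + norm x) ^ (2 * DIM(real^'n)))" for x
      using C2[of x] mult_right_mono[OF max.cobounded2 w[of x], of C2 C1] by linarith
  qed (use cF cG dF in auto)
qed

theorem corollary2p17:
  fixes W :: "real^'n::finite \<Rightarrow> real" and c0 e0 :: real
    and Yp Ym :: "real^'n \<Rightarrow> complex"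
  assumes "CARD('n) \<ge> 5"
    and "c0 > 0"
    and "\<forall>x. W x = c0 * (1 + (norm x)\<^sup>2) powr (- (real CARD('n) - 2) / 2)"
    and "\<forall>x. - laplacian W x = conv4 (\<lambda>y. (W y)\<^sup>2) x * W x"
    and "e0 > 0"
    and "schwartz Yp" and "schwartz Ym"
    and "radial Yp" and "radial Ym"
    and "Yp \<noteq> (\<lambda>_. 0)" and "Ym \<noteq> (\<lambda>_. 0)"
    and "\<forall>x. Lop W Yp x = complex_of_real e0 * Yp x"
    and "\<forall>x. Lop W Ym x = - complex_of_real e0 * Ym x"
    and "\<forall>x. Yp x = cnj (Ym x)"
  shows "Bform W Yp Ym \<noteq> 0"
proof
  assume B0: "Bform W Yp Ym = 0"
  define p where "p = - (real CARD('n) - 2) / 2"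
  have Weq: "W = (\<lambda>x. c0 * (1 + (norm x)^2) powr p)"
    using assms(3) unfolding p_def by (simp add: fun_eq_iff)
  have Wpos: "0 < W x" for x unfolding Weq using assms(2)
    by (intro mult_pos_pos) (auto simp: powr_gt_zero add_nonneg_eq_0_iff)
  have W0: "W x \<noteq> 0" for x using Wpos[of x] by simp
  have lW: "((\<lambda>t. W (x + t *\<^sub>R axis i 1)) has_real_derivative Wi c0 p i x) (at 0)" for x i
    unfolding Weq by (rule W_line)
  have lWi: "((\<lambda>t. Wi c0 p i (x + t *\<^sub>R axis i 1)) has_real_derivative Wii c0 p i x) (at 0)" for x i
    by (rule Wi_line)
  have pdW: "pd i W = Wi c0 p i" for i by (rule ext, rule pd_eqI, rule lW)
  have pdWi: "pd i (Wi c0 p i) = Wii c0 p i" for i by (rule ext, rule pd_eqI, rule lWi)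
  have lapW: "laplacian W x = (\<Sum>i\<in>UNIV. Wii c0 p i x)" for x
    unfolding laplacian_def by (simp add: pdW pdWi)
  have cW: "continuous_on UNIV W" unfolding Weq by (rule cont_W)
  have pinvW: "polyb (\<lambda>x. inverse (W x))" unfolding Weq by (rule polyb_invW[OF assms(2)])
  have pW: "polyb W" unfolding Weq by (intro polyb_mult polyb_const polyb_powr)

  define b where "b = (\<lambda>y. Im (Yp y))"
  define a where "a = (\<lambda>y. Re (Yp y))"
  define bi where "bi i = (\<lambda>x. Im (pd i Yp x))" for i
  define bii where "bii i = (\<lambda>x. Im (pd i (pd i Yp) x))" for i
  have dY: "pds is Yp differentiable (at x)" for "is" x using schwartz_diff[OF assms(6)] .
  have lb: "((\<lambda>t. b (x + t *\<^sub>R axis i 1)) has_real_derivative bi i x) (at 0)" for x i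
    unfolding b_def bi_def using line_Im[OF dY[of "[]"]] by simp
  have lbi: "((\<lambda>t. bi i (x + t *\<^sub>R axis i 1)) has_real_derivative bii i x) (at 0)" for x i
    unfolding bi_def bii_def using line_Im[OF dY[of "[i]"]] by simp
  have pdb: "pd i b = bi i" for i by (rule ext, rule pd_eqI, rule lb)
  have pdbi: "pd i (bi i) = bii i" for i by (rule ext, rule pd_eqI, rule lbi)
  have lapb: "laplacian b x = (\<Sum>i\<in>UNIV. bii i x)" for x
    unfolding laplacian_def by (simp add: pdb pdbi)
  have cb: "continuous_on UNIV b" using schwartz_cont_Im[OF assms(6), of "[]"] unfolding b_def by simp
  have cbi: "continuous_on UNIV (bi i)" for i
    using schwartz_cont_Im[OF assms(6), of "[i]"] unfolding bi_def by simp
  have cbii: "continuous_on UNIV (bii i)" for i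
    using schwartz_cont_Im[OF assms(6), of "[i,i]"] unfolding bii_def by simp
  have rb: "rapid b" using schwartz_rapid_Im[OF assms(6), of "[]"] unfolding b_def by simp
  have rbi: "rapid (bi i)" for i
    using schwartz_rapid_Im[OF assms(6), of "[i]"] unfolding bi_def by simp
  have rbii: "rapid (bii i)" for i
    using schwartz_rapid_Im[OF assms(6), of "[i,i]"] unfolding bii_def by simp

  have eq1: "- Lminus W b x = e0 * a x" for x
  proof -
    have "Re (Lop W Yp x) = Re (complex_of_real e0 * Yp x)" using assms(12) by simp
    then show ?thesis by (simp add: Lop_def a_def b_def)
  qed
  have eq2: "Lplus W a x = e0 * b x" for x
  proof -
    have "Im (Lop W Yp x) = Im (complex_of_real e0 * Yp x)" using assms(12) by simp
    then show ?thesis by (simp add: Lop_def a_def b_def)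
  qed
  have Ym: "Ym x = cnj (Yp x)" for x using assms(14) by (metis complex_cnj_cnj)
  have Bval: "Bform W Yp Ym = e0 * integral\<^sup>L lborel (\<lambda>x. a x * b x)"
  proof -
    have 1: "(\<lambda>x. Lplus W (\<lambda>y. Re (Yp y)) x * Re (Ym x)) = (\<lambda>x. e0 * (a x * b x))"
      using eq2 Ym unfolding a_def b_def by (simp add: fun_eq_iff)
    have 2: "(\<lambda>x. Lminus W (\<lambda>y. Im (Yp y)) x * Im (Ym x)) = (\<lambda>x. e0 * (a x * b x))"
    proof
      fix x
      have "Lminus W b x = - (e0 * a x)" using eq1[of x] by linarith
      then show "Lminus W (\<lambda>y. Im (Yp y)) x * Im (Ym x) = e0 * (a x * b x)"
        using Ym[of x] unfolding a_def b_def by simp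
    qed
    show ?thesis unfolding Bform_def 1 2 by simp
  qed
  then have ab0: "integral\<^sup>L lborel (\<lambda>x. a x * b x) = 0" using B0 assms(5) by simp
  have I0: "integral\<^sup>L lborel (\<lambda>x. b x * Lminus W b x) = 0"
  proof -
    have "(\<lambda>x. b x * Lminus W b x) = (\<lambda>x. (- e0) * (a x * b x))"
    proof
      fix x
      have "Lminus W b x = - (e0 * a x)" using eq1[of x] by linarith
      then show "b x * Lminus W b x = (- e0) * (a x * b x)" by simp
    qed
    then show ?thesis using ab0 by simp
  qed

  define V where "V x = conv4 (\<lambda>y. (W y)\<^sup>2) x" for x
  have hV: "V x = - (\<Sum>i\<in>UNIV. Wii c0 p i x) * inverse (W x)" for x
  proof -
    have "- (\<Sum>i\<in>UNIV. Wii c0 p i x) = V x * W x" using assms(4) lapW unfolding V_def by simp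
    then show ?thesis using W0[of x] by (simp add: field_simps)
  qed
  define R where "R i x = Wi c0 p i x * inverse (W x)" for i x
  define Q where "Q i x = (bi i x - b x * R i x) * (bi i x - b x * R i x)" for i x
  define G1 where "G1 i x = bi i x * bi i x + b x * bii i x" for i x
  define F2 where "F2 i x = (b x * b x) * (Wi c0 p i x * inverse (W x))" for i x
  define G2 where "G2 i x = (b x * b x) * ((Wii c0 p i x * W x - Wi c0 p i x * Wi c0 p i x)
      * (inverse (W x) * inverse (W x))) + (2 * b x * bi i x) * (Wi c0 p i x * inverse (W x))" for i x
  define T where "T i x = - b x * bii i x + (b x * b x) * Wii c0 p i x * inverse (W x)" for i x
  have sumT: "b x * Lminus W b x = (\<Sum>i\<in>UNIV. T i x)" for x
  proof -
    have "(\<Sum>i\<in>UNIV. T i x) = (\<Sum>i\<in>UNIV. (- b x) * bii i x) + (\<Sum>i\<in>UNIV. (b x * b x) * Wii c0 p i x * inverse (W x))"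
      unfolding T_def by (simp only: sum.distrib)
    also have "\<dots> = (- b x) * (\<Sum>i\<in>UNIV. bii i x) + (b x * b x) * (\<Sum>i\<in>UNIV. Wii c0 p i x) * inverse (W x)"
      by (simp add: sum_distrib_left sum_distrib_right)
    finally show ?thesis
      unfolding Lminus_def V_def[symmetric] hV lapb by (simp add: algebra_simps)
  qed
  have TQ: "T i x = Q i x - G1 i x + G2 i x" for i x
    unfolding T_def Q_def G1_def G2_def R_def using W0[of x] by (simp add: field_simps)
  have pR: "polyb (R i)" for i unfolding R_def by (rule polyb_mult[OF polyb_Wi pinvW])
  have rQ: "rapid (Q i)" for i
  proof -
    have "rapid (\<lambda>x. bi i x - b x * R i x)" using rapid_diff[OF rbi rapid_mult_poly[OF rb pR]] by this
    from rapid_mult[OF this this] show ?thesis unfolding Q_def by simp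
  qed
  have rG1: "rapid (G1 i)" for i
    unfolding G1_def by (rule rapid_add[OF rapid_mult[OF rbi rbi] rapid_mult[OF rb rbii]])
  have rF1: "rapid (\<lambda>x. b x * bi i x)" for i by (rule rapid_mult[OF rb rbi])
  have rF2: "rapid (F2 i)" for i
    unfolding F2_def by (rule rapid_mult_poly[OF rapid_mult[OF rb rb] polyb_mult[OF polyb_Wi pinvW]])
  have rG2: "rapid (G2 i)" for i
    unfolding G2_def
    by (rule rapid_add[OF rapid_mult_poly[OF rapid_mult[OF rb rb]
          polyb_mult[OF polyb_diff[OF polyb_mult[OF polyb_Wii pW] polyb_mult[OF polyb_Wi polyb_Wi]]
                     polyb_mult[OF pinvW pinvW]]]
          rapid_mult_poly[OF rapid_mult[OF rapid_cmult[OF rb] rbi] polyb_mult[OF polyb_Wi pinvW]]])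
  have cinvW: "continuous_on UNIV (\<lambda>x. inverse (W x))"
    using cW W0 by (intro continuous_intros) auto
  have cR: "continuous_on UNIV (R i)" for i
    unfolding R_def by (intro continuous_intros cont_Wi cW) (simp add: W0)
  have cQ: "continuous_on UNIV (Q i)" for i
    unfolding Q_def by (intro continuous_intros cbi cb cR)
  have cG1: "continuous_on UNIV (G1 i)" for i
    unfolding G1_def by (intro continuous_intros cbi cb cbii)
  have cF1: "continuous_on UNIV (\<lambda>x. b x * bi i x)" for i
    by (intro continuous_intros cbi cb)
  have cF2: "continuous_on UNIV (F2 i)" for i
    unfolding F2_def by (intro continuous_intros cont_Wi cW cb) (simp add: W0)
  have cG2: "continuous_on UNIV (G2 i)" for i
    unfolding G2_def by (intro continuous_intros cont_Wi cont_Wii cW cb cbi) (simp_all add: W0)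
  have G1z: "integral\<^sup>L lborel (G1 i) = 0" for i
  proof (rule ibp_rapid[OF rF1 rG1 cF1 cG1])
    fix x
    show "((\<lambda>t. b (x + t *\<^sub>R axis i 1) * bi i (x + t *\<^sub>R axis i 1)) has_real_derivative G1 i x) (at 0)"
      by (rule DERIV_cong[OF DERIV_mult'[OF lb lbi]]) (simp add: G1_def algebra_simps)
  qed
  have G2z: "integral\<^sup>L lborel (G2 i) = 0" for i
  proof (rule ibp_rapid[OF rF2 rG2 cF2 cG2])
    fix x
    show "((\<lambda>t. F2 i (x + t *\<^sub>R axis i 1)) has_real_derivative G2 i x) (at 0)"
      unfolding F2_def
      by (rule DERIV_cong[OF deriv_F2[OF lb lW lWi]]) (simp_all add: G2_def W0)
  qed
  have intQ: "integrable lborel (Q i)" for i by (rule rapid_integrable[OF rQ cQ])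
  have intG1: "integrable lborel (G1 i)" for i by (rule rapid_integrable[OF rG1 cG1])
  have intG2: "integrable lborel (G2 i)" for i by (rule rapid_integrable[OF rG2 cG2])
  have intT: "integrable lborel (T i)" and IT: "integral\<^sup>L lborel (T i) = integral\<^sup>L lborel (Q i)" for i
  proof -
    have Teq: "T i = (\<lambda>x. Q i x - G1 i x + G2 i x)" by (simp add: fun_eq_iff TQ)
    show "integrable lborel (T i)" unfolding Teq using intQ intG1 intG2 by simp
    show "integral\<^sup>L lborel (T i) = integral\<^sup>L lborel (Q i)"
      unfolding Teq using intQ intG1 intG2 G1z G2z by simp
  qed
  have "0 = integral\<^sup>L lborel (\<lambda>x. \<Sum>i\<in>UNIV. T i x)" using I0 sumT by simp
  also have "\<dots> = (\<Sum>i\<in>UNIV. integral\<^sup>L lborel (T i))"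
    by (rule Bochner_Integration.integral_sum) (use intT in auto)
  also have "\<dots> = (\<Sum>i\<in>UNIV. integral\<^sup>L lborel (Q i))" by (simp add: IT)
  finally have sumQ: "(\<Sum>i\<in>UNIV. integral\<^sup>L lborel (Q i)) = 0" by simp
  have Qnn: "0 \<le> Q i x" for i x unfolding Q_def by simp
  have IQnn: "0 \<le> integral\<^sup>L lborel (Q i)" for i by (rule Bochner_Integration.integral_nonneg) (simp add: Qnn)
  have IQ0: "integral\<^sup>L lborel (Q i) = 0" for i
    using sumQ IQnn by (simp add: sum_nonneg_eq_0_iff)
  have Q0: "Q i x = 0" for i x
  proof -
    have "AE x in lborel. Q i x = 0"
      using integral_nonneg_eq_0_iff_AE[OF intQ, of i] Qnn IQ0 by simp
    then have "AE x in lebesgue. x \<in> {x. Q i x = 0}" by (simp add: AE_completion)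
    moreover have "closed {x. Q i x = 0}" by (rule closed_Collect_eq[OF cQ continuous_on_const])
    ultimately show ?thesis using mem_closed_if_AE_lebesgue by blast
  qed
  have biR: "bi i x = b x * R i x" for i x using Q0[of i x] unfolding Q_def by simp

  obtain j :: 'n where True by simp
  define e where "e = (axis j 1 :: real^'n)"
  define u where "u t = b (t *\<^sub>R e) / W (t *\<^sub>R e)" for t
  have du: "(u has_real_derivative 0) (at t)" for t
  proof -
    have d1: "((\<lambda>s. b (0 + s *\<^sub>R e)) has_real_derivative bi j (0 + t *\<^sub>R e)) (at t)"
      unfolding e_def by (rule line_shift[where f=b and g="bi j", OF lb])
    have d2: "((\<lambda>s. W (0 + s *\<^sub>R e)) has_real_derivative Wi c0 p j (0 + t *\<^sub>R e)) (at t)"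
      unfolding e_def by (rule line_shift[where f=W and g="Wi c0 p j", OF lW])
    have "bi j (t *\<^sub>R e) * W (t *\<^sub>R e) = b (t *\<^sub>R e) * Wi c0 p j (t *\<^sub>R e)"
      using biR[of j "t *\<^sub>R e"] W0[of "t *\<^sub>R e"] unfolding R_def by (simp add: field_simps)
    then show ?thesis unfolding u_def
      using deriv_quot[of "\<lambda>s. b (s *\<^sub>R e)" "bi j (t *\<^sub>R e)" t "\<lambda>s. W (s *\<^sub>R e)" "Wi c0 p j (t *\<^sub>R e)"]
        d1 d2 W0 by simp
  qed
  define c where "c = u 0"
  have bc: "b x = c * W x" for x
  proof -
    have ne: "norm (norm x *\<^sub>R e) = norm x" unfolding e_def by simp
    have "b x = b (norm x *\<^sub>R e)"
      using assms(8) ne unfolding radial_def b_def by metis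
    moreover have "W x = W (norm x *\<^sub>R e)" unfolding Weq using ne by (simp only:)
    moreover have "u (norm x) = u 0" using DERIV_isconst_all[of u] du by blast
    ultimately have "b x / W x = c" unfolding c_def u_def by simp
    then show ?thesis using W0[of x] by (simp add: field_simps)
  qed
  have bfun: "b = (\<lambda>y. c * W y)" using bc by (simp add: fun_eq_iff)
  have pdcW: "pd i (\<lambda>y. c * W y) = (\<lambda>y. c * Wi c0 p i y)" for i
    by (rule ext, rule pd_eqI, rule DERIV_cmult, rule lW)
  have pdcWi: "pd i (\<lambda>y. c * Wi c0 p i y) = (\<lambda>y. c * Wii c0 p i y)" for i
    by (rule ext, rule pd_eqI, rule DERIV_cmult, rule lWi)
  have Lm0: "Lminus W b x = 0" for x
  proof -
    have "laplacian b x = c * laplacian W x"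
      unfolding bfun laplacian_def by (simp add: pdcW pdcWi pdW pdWi sum_distrib_left)
    then show ?thesis unfolding Lminus_def using assms(4) bc[of x]
      by (simp add: algebra_simps) (metis mult.assoc mult.commute mult_minus_right)
  qed
  have a0: "a x = 0" for x using eq1[of x] Lm0[of x] assms(5) by simp
  have afun: "a = (\<lambda>_. 0)" using a0 by (simp add: fun_eq_iff)
  have pd0: "pd i (\<lambda>_::real^'n. 0::real) = (\<lambda>_. 0)" for i
    by (rule ext, rule pd_eqI) simp
  have Lp0: "Lplus W a x = 0" for x
    unfolding afun Lplus_def laplacian_def conv4_def by (simp add: pd0)
  have b0: "b x = 0" for x using eq2[of x] Lp0[of x] assms(5) by simp
  have "Yp x = 0" for x
    using a0[of x] b0[of x] unfolding a_def b_def by (simp add: complex_eq_iff)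
  then show False using assms(10) by (simp add: fun_eq_iff)
qed

end
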